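(* For every $0<\epsilon<1$, $\{\Xi_{\mathrm{Sp}_{\mathrm{ap},\epsilon}},\Omega^B_{\ell^2(\mathbb{N})},\mathcal{M}_{\mathrm{H}},\Lambda_{\mathbb{N}}\}\notin\Delta_2^G$; that is, there is no sequence of general algorithms $\Gamma_n$ with $\lim_{n\to\infty}\Gamma_n(F)=\mathrm{Sp}_{\mathrm{ap},\epsilon}(\mathcal{K}_F)$ in the Hausdorff metric for every $F\in\Omega^B_{\ell^2(\mathbb{N})}$.
   Context: $\ell^2(\mathbb{N})$ is regarded as an RKHS of functions on $\mathbb{N}$ with kernel functions $\mathfrak{K}_i=e_i$ (the standard basis vectors). For $F:\mathbb{N}\to\mathbb{N}$ the Koopman operator is $\mathcal{K}_Fg=g\circ F$. $\Omega^B_{\ell^2(\mathbb{N})}$ is the set of $F:\mathbb{N}\to\mathbb{N}$ for which $\mathcal{K}_F$ is a bounded operator on all of $\ell^2(\mathbb{N})$. $\Xi_{\mathrm{Sp}_{\mathrm{ap},\epsilon}}(F)=\mathrm{Sp}_{\mathrm{ap},\epsilon}(\mathcal{K}_F)=\overline{\{z\in\mathbb{C}:\sigma_{\inf}(\mathcal{K}_F-zI)<\epsilon\}}$ where $\sigma_{\inf}(T)=\inf_{\|g\|=1}\|Tg\|$. $\mathcal{M}_{\mathrm{H}}$ is the set of nonempty compact subsets of $\mathbb{C}$ with the Hausdorff metric. $\Lambda_{\mathbb{N}}=\{F\mapsto F(j):j\in\mathbb{N}\}$. A general algorithm for a problem $\{\Xi,\Omega,\mathcal{M},\Lambda\}$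 is a map $\Gamma:\Omega\to\mathcal{M}$ such that for each $\zeta\in\Omega$ there is a nonempty finite $\Lambda_\Gamma(\zeta)\subset\Lambda$ such that whenever $\zeta'\in\Omega$ satisfies $f(\zeta')=f(\zeta)$ for all $f\in\Lambda_\Gamma(\zeta)$, then $\Lambda_\Gamma(\zeta')=\Lambda_\Gamma(\zeta)$ and $\Gamma(\zeta')=\Gamma(\zeta)$. The problem is in $\Delta_2^G$ iff there exist general algorithms $\Gamma_n$ with $\Gamma_n(\zeta)\to\Xi(\zeta)$ for all $\zeta\in\Omega$. *)

theory Defs
  imports "HOL-Analysis.Analysis"
begin

definition l2 :: "(nat \<Rightarrow> complex) set" where
  "l2 = {g. summable (\<lambda>i. (cmod (g i))^2)}"

definition l2norm :: "(nat \<Rightarrow> complex) \<Rightarrow> real" where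
  "l2norm g = sqrt (\<Sum>i. (cmod (g i))^2)"

definition koopman :: "(nat \<Rightarrow> nat) \<Rightarrow> (nat \<Rightarrow> complex) \<Rightarrow> (nat \<Rightarrow> complex)" where
  "koopman F g = g \<circ> F"

definition OmegaB :: "(nat \<Rightarrow> nat) set" where
  "OmegaB = {F. (\<forall>g\<in>l2. koopman F g \<in> l2) \<and>
                (\<exists>C. \<forall>g\<in>l2. l2norm (koopman F g) \<le> C * l2norm g)}"

definition sigma_inf_koopman :: "(nat \<Rightarrow> nat) \<Rightarrow> complex \<Rightarrow> real" where
  "sigma_inf_koopman F z =
     Inf {l2norm (\<lambda>i. koopman F g i - z * g i) | g. g \<in> l2 \<and> l2norm g = 1}"

definition Sp_ap_eps :: "real \<Rightarrow> (nat \<Rightarrow> nat) \<Rightarrow> complex set" where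
  "Sp_ap_eps \<epsilon> F = closure {z. sigma_inf_koopman F z < \<epsilon>}"

text \<open>Hausdorff distance (used on nonempty compact sets).\<close>
definition hausdorff_dist :: "complex set \<Rightarrow> complex set \<Rightarrow> real" where
  "hausdorff_dist A B = max (SUP a\<in>A. infdist a B) (SUP b\<in>B. infdist b A)"

text \<open>General algorithm on domain Omega with evaluation set Lambda_N = {F |-> F j}:
  L F is the (finite, nonempty) set of indices j whose values F j are read.\<close>
definition general_algorithm ::
  "(nat \<Rightarrow> nat) set \<Rightarrow> ((nat \<Rightarrow> nat) \<Rightarrow> complex set) \<Rightarrow> ((nat \<Rightarrow> nat) \<Rightarrow> nat set) \<Rightarrow> bool" where
  "general_algorithm \<Omega> \<Gamma> L \<longleftrightarrow>
     (\<forall>F\<in>\<Omega>. \<Gamma> F \<noteq> {} \<and> compact (\<Gamma> F) \<and> finite (L F) \<and> L F \<noteq> {} \<and>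
        (\<forall>F'\<in>\<Omega>. (\<forall>j\<in>L F. F' j = F j) \<longrightarrow> L F' = L F \<and> \<Gamma> F' = \<Gamma> F))"

end

theory Submission
  imports Defs
begin

lemma reindex_inj:
  assumes "inj F" "summable f" "\<And>x. 0 \<le> (f x::real)"
  shows "summable (\<lambda>i. f (F i))" "(\<Sum>i. f (F i)) \<le> suminf f"
proof -
  have b: "sum (\<lambda>i. f (F i)) {..<n} \<le> suminf f" for n
  proof -
    have "sum (\<lambda>i. f (F i)) {..<n} = sum f (F ` {..<n})"
      using assms(1) by (simp add: sum.reindex inj_on_def)
    also have "\<dots> \<le> suminf f" using assms by (intro sum_le_suminf) auto
    finally show ?thesis .
  qed
  show s: "summable (\<lambda>i. f (F i))" using b assms(3) by (intro summableI_nonneg_bounded) auto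
  show "(\<Sum>i. f (F i)) \<le> suminf f" using b s by (intro suminf_le_const) auto
qed

lemma l2_koop:
  assumes "inj F" "g \<in> l2"
  shows "summable (\<lambda>i. (cmod (g (F i)))^2)" "(\<Sum>i. (cmod (g (F i)))^2) \<le> (\<Sum>i. (cmod (g i))^2)"
  using reindex_inj[OF assms(1), of "\<lambda>i. (cmod (g i))^2"] assms(2) by (auto simp: l2_def)

lemma l2_koop_surj:
  assumes "inj F" "surj F" "g \<in> l2"
  shows "(\<Sum>i. (cmod (g i))^2) \<le> (\<Sum>i. (cmod (g (F i)))^2)"
proof -
  have ih: "inj (inv F)" using assms(2) by (simp add: surj_imp_inj_inv)
  have "(\<Sum>i. (cmod (g (F (inv F i))))^2) \<le> (\<Sum>i. (cmod (g (F i)))^2)"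
    using reindex_inj[OF ih, of "\<lambda>i. (cmod (g (F i)))^2"] l2_koop[OF assms(1,3)] by auto
  moreover have "\<And>i. F (inv F i) = i" using assms(2) by (simp add: surj_f_inv_f)
  ultimately show ?thesis by simp
qed

lemma pw_upper: "(cmod (a - z*b))^2 \<le> 2*(cmod a)^2 + 2*(cmod z)^2*(cmod b)^2"
proof -
  have "cmod (a - z*b) \<le> cmod a + cmod z * cmod b"
    by (metis norm_mult norm_triangle_ineq4)
  hence "(cmod (a - z*b))^2 \<le> (cmod a + cmod z * cmod b)^2"
    by (simp add: power_mono)
  also have "\<dots> \<le> 2*(cmod a)^2 + 2*(cmod z)^2*(cmod b)^2"
  proof -
    define x where "x = cmod a"
    define w where "w = cmod z * cmod b"
    have e: "(x+w)^2 = 2*x^2 + 2*w^2 - (x-w)^2" by (simp add: power2_eq_square algebra_simps)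
    have "0 \<le> (x-w)^2" by simp
    hence "(x+w)^2 \<le> 2*x^2 + 2*w^2" using e by linarith
    thus ?thesis by (simp add: x_def w_def power_mult_distrib)
  qed
  finally show ?thesis .
qed

lemma pw_lower: "(1 - cmod z)*(cmod a)^2 + ((cmod z)^2 - cmod z)*(cmod b)^2 \<le> (cmod (a - z*b))^2"
proof -
  define r where "r = cmod z"
  define x where "x = cmod a"
  define y where "y = cmod b"
  have r0: "r \<ge> 0" "x \<ge> 0" "y \<ge> 0" by (auto simp: r_def x_def y_def)
  have "\<bar>x - r*y\<bar> \<le> cmod (a - z*b)" unfolding x_def r_def y_def
    by (metis norm_mult norm_triangle_ineq3)
  hence "(x - r*y)^2 \<le> (cmod (a - z*b))^2"
    by (metis abs_ge_zero power2_abs power_mono)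
  moreover have "(1 - r)*x^2 + (r^2 - r)*y^2 \<le> (x - r*y)^2"
  proof -
    have "2*x*y \<le> x^2 + y^2" using sum_squares_bound by (simp add: power2_eq_square) 
    hence "r*(2*x*y) \<le> r*(x^2+y^2)" using r0 by (simp add: mult_left_mono)
    thus ?thesis by (simp add: power2_eq_square algebra_simps)
  qed
  ultimately show ?thesis by (simp add: r_def x_def y_def)
qed

lemma diff_summable:
  assumes "inj F" "g \<in> l2"
  shows "summable (\<lambda>i. (cmod (g (F i) - z * g i))^2)"
proof (rule summable_comparison_test'[where N=0])
  show "summable (\<lambda>i. 2*(cmod (g (F i)))^2 + 2*(cmod z)^2*(cmod (g i))^2)"
    using l2_koop[OF assms] assms(2) unfolding l2_def
    by (intro summable_add summable_mult) auto
  show "norm ((cmod (g (F i) - z * g i))^2) \<le> 2*(cmod (g (F i)))^2 + 2*(cmod z)^2*(cmod (g i))^2" for i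
    using pw_upper by simp
qed

lemma koop_eq: "koopman F g i - z * g i = g (F i) - z * g i"
  by (simp add: koopman_def)

lemma key_lower:
  assumes "inj F" "g \<in> l2"
  shows "(1 - cmod z)*(\<Sum>i. (cmod (g (F i)))^2) + ((cmod z)^2 - cmod z)*(\<Sum>i. (cmod (g i))^2)
          \<le> (\<Sum>i. (cmod (g (F i) - z * g i))^2)"
proof -
  have s1: "summable (\<lambda>i. (cmod (g (F i)))^2)" using l2_koop[OF assms] by simp
  have s2: "summable (\<lambda>i. (cmod (g i))^2)" using assms(2) by (simp add: l2_def)
  have "(1 - cmod z)*(\<Sum>i. (cmod (g (F i)))^2) + ((cmod z)^2 - cmod z)*(\<Sum>i. (cmod (g i))^2)
      = (\<Sum>i. (1 - cmod z)*(cmod (g (F i)))^2 + ((cmod z)^2 - cmod z)*(cmod (g i))^2)"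
    using suminf_add[OF summable_mult[OF s1, of "1 - cmod z"] summable_mult[OF s2, of "(cmod z)^2 - cmod z"]]
    by (simp add: suminf_mult s1 s2)
  also have "\<dots> \<le> (\<Sum>i. (cmod (g (F i) - z * g i))^2)"
    using s1 s2 diff_summable[OF assms, of z] pw_lower
    by (intro suminf_le) (auto intro!: summable_add summable_mult)
  finally show ?thesis .
qed

lemma inj_OmegaB: assumes "inj F" shows "F \<in> OmegaB"
  unfolding OmegaB_def
proof (intro CollectI conjI ballI exI[of _ 1])
  fix g assume g: "g \<in> l2"
  show "koopman F g \<in> l2" using l2_koop[OF assms g] by (simp add: l2_def koopman_def)
  show "l2norm (koopman F g) \<le> 1 * l2norm g" using l2_koop[OF assms g]
    by (simp add: l2norm_def koopman_def)
qed

definition ev :: "nat \<Rightarrow> nat \<Rightarrow> complex" where "ev a = (\<lambda>i. if i = a then 1 else 0)"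

lemma ev_l2: "ev a \<in> l2" "l2norm (ev a) = 1"
proof -
  have e: "(\<lambda>i. (cmod (ev a i))^2) = (\<lambda>i. if i = a then 1 else 0)" by (auto simp: ev_def)
  have "(\<lambda>i. (cmod (ev a i))^2) sums 1" unfolding e using sums_single[of a "\<lambda>_. 1::real"] by simp
  thus "ev a \<in> l2" "l2norm (ev a) = 1" by (auto simp: l2_def l2norm_def sums_iff)
qed

lemma sigma_set_nonneg:
  assumes "inj F" "x \<in> {l2norm (\<lambda>i. koopman F g i - z * g i) | g. g \<in> l2 \<and> l2norm g = 1}"
  shows "0 \<le> x"
  using assms diff_summable[OF assms(1)] by (auto simp: l2norm_def koop_eq intro!: suminf_nonneg)

lemma sigma_upper:
  assumes "inj F" "g \<in> l2" "l2norm g = 1"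
  shows "sigma_inf_koopman F z \<le> l2norm (\<lambda>i. koopman F g i - z * g i)"
  unfolding sigma_inf_koopman_def
  apply (rule cInf_lower)
  using assms sigma_set_nonneg[OF assms(1)] by (auto simp: bdd_below_def)

lemma sigma_lower:
  assumes "\<And>g. g \<in> l2 \<Longrightarrow> l2norm g = 1 \<Longrightarrow> c \<le> l2norm (\<lambda>i. koopman F g i - z * g i)"
  shows "c \<le> sigma_inf_koopman F z"
  unfolding sigma_inf_koopman_def
  apply (rule cInf_greatest)
  using assms ev_l2 by auto

lemma eigen_in_Sp:
  assumes "inj F" "0 < \<epsilon>" "g \<in> l2" "l2norm g = 1" "\<And>i. g (F i) = z * g i"
  shows "z \<in> Sp_ap_eps \<epsilon> F"
proof -
  have "sigma_inf_koopman F z \<le> l2norm (\<lambda>i. koopman F g i - z * g i)"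
    using sigma_upper assms by blast
  also have "\<dots> = 0" using assms(5) by (simp add: koop_eq l2norm_def)
  finally show ?thesis unfolding Sp_ap_eps_def using assms(2)
    by (intro set_mp[OF closure_subset]) auto
qed

lemma Sp_bounded:
  assumes "inj F" "\<epsilon> < 1"
  shows "Sp_ap_eps \<epsilon> F \<subseteq> cball 0 2"
  unfolding Sp_ap_eps_def
proof (rule closure_minimal)
  show "closed (cball (0::complex) 2)" by simp
  show "{z. sigma_inf_koopman F z < \<epsilon>} \<subseteq> cball 0 2"
  proof
    fix z assume z: "z \<in> {z. sigma_inf_koopman F z < \<epsilon>}"
    show "z \<in> cball 0 2"
    proof (rule ccontr)
      assume "z \<notin> cball 0 2"
      hence r: "cmod z > 2" by auto
      have "cmod z - 1 \<le> sigma_inf_koopman F z"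
      proof (rule sigma_lower)
        fix g assume g: "g \<in> l2" "l2norm g = 1"
        have B: "(\<Sum>i. (cmod (g i))^2) = 1" using g(2) unfolding l2norm_def
          using g(1) by (metis l2_def mem_Collect_eq real_sqrt_eq_1_iff)
        have A: "(\<Sum>i. (cmod (g (F i)))^2) \<le> 1" using l2_koop[OF assms(1) g(1)] B by simp
        have "(cmod z - 1)^2 \<le> (1 - cmod z)*(\<Sum>i. (cmod (g (F i)))^2) + ((cmod z)^2 - cmod z)*1"
        proof -
          have "(1 - cmod z)*1 \<le> (1 - cmod z)*(\<Sum>i. (cmod (g (F i)))^2)"
            using A r by (intro mult_left_mono_neg) auto
          thus ?thesis by (simp add: power2_eq_square algebra_simps)
        qed
        also have "\<dots> \<le> (\<Sum>i. (cmod (g (F i) - z * g i))^2)" using key_lower[OF assms(1) g(1), of z] B by simp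
        finally have "cmod z - 1 \<le> sqrt (\<Sum>i. (cmod (g (F i) - z * g i))^2)"
          by (rule real_le_rsqrt)
        thus "cmod z - 1 \<le> l2norm (\<lambda>i. koopman F g i - z * g i)" by (simp add: l2norm_def koop_eq)
      qed
      thus False using z r assms(2) by auto
    qed
  qed
qed

lemma Sp_away:
  assumes "inj F" "surj F" "\<epsilon> < 1" "0 < \<epsilon>"
  shows "Sp_ap_eps \<epsilon> F \<subseteq> {z. 1 - \<epsilon> \<le> cmod z}"
  unfolding Sp_ap_eps_def
proof (rule closure_minimal)
  show "closed {z::complex. 1 - \<epsilon> \<le> cmod z}" by (intro closed_Collect_le continuous_intros)
  show "{z. sigma_inf_koopman F z < \<epsilon>} \<subseteq> {z. 1 - \<epsilon> \<le> cmod z}"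
  proof
    fix z assume z: "z \<in> {z. sigma_inf_koopman F z < \<epsilon>}"
    show "z \<in> {z. 1 - \<epsilon> \<le> cmod z}"
    proof (rule ccontr)
      assume "z \<notin> {z. 1 - \<epsilon> \<le> cmod z}"
      hence r: "cmod z < 1 - \<epsilon>" by auto
      have "1 - cmod z \<le> sigma_inf_koopman F z"
      proof (rule sigma_lower)
        fix g assume g: "g \<in> l2" "l2norm g = 1"
        have B: "(\<Sum>i. (cmod (g i))^2) = 1" using g(2) unfolding l2norm_def
          using g(1) by (metis l2_def mem_Collect_eq real_sqrt_eq_1_iff)
        have A: "(\<Sum>i. (cmod (g (F i)))^2) \<ge> 1" using l2_koop_surj[OF assms(1,2) g(1)] B by simp
        have "(1 - cmod z)^2 \<le> (1 - cmod z)*(\<Sum>i. (cmod (g (F i)))^2) + ((cmod z)^2 - cmod z)*1"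
        proof -
          have "(1 - cmod z)*1 \<le> (1 - cmod z)*(\<Sum>i. (cmod (g (F i)))^2)"
            using A r assms(3,4) by (intro mult_left_mono) auto
          thus ?thesis by (simp add: power2_eq_square algebra_simps)
        qed
        also have "\<dots> \<le> (\<Sum>i. (cmod (g (F i) - z * g i))^2)" using key_lower[OF assms(1) g(1), of z] B by simp
        finally have "1 - cmod z \<le> sqrt (\<Sum>i. (cmod (g (F i) - z * g i))^2)"
          by (rule real_le_rsqrt)
        thus "1 - cmod z \<le> l2norm (\<lambda>i. koopman F g i - z * g i)" by (simp add: l2norm_def koop_eq)
      qed
      thus False using z r by auto
    qed
  qed
qed

lemma H1:
  assumes "compact X" "X \<noteq> {}" "S \<subseteq> cball 0 2" "p \<in> S" "hausdorff_dist X S < \<delta>"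
  shows "\<exists>x\<in>X. cmod (x - p) < \<delta>"
proof -
  obtain x0 where x0: "x0 \<in> X" using assms(2) by auto
  have bdd: "bdd_above ((\<lambda>b. infdist b X) ` S)"
  proof (rule bdd_aboveI2)
    fix b assume "b \<in> S"
    hence "cmod b \<le> 2" using assms(3) by auto
    moreover have "infdist b X \<le> dist b x0" using x0 by (rule infdist_le)
    moreover have "dist b x0 \<le> cmod b + cmod x0" by (simp add: dist_norm norm_triangle_ineq4)
    ultimately show "infdist b X \<le> 2 + cmod x0" by linarith
  qed
  have "infdist p X \<le> (SUP b\<in>S. infdist b X)" using bdd assms(4) by (rule cSUP_upper2) simp
  also have "\<dots> \<le> hausdorff_dist X S" unfolding hausdorff_dist_def by simp
  finally have "infdist p X < \<delta>" using assms(5) by linarith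
  moreover obtain x where "x \<in> X" "infdist p X = dist p x"
    using infdist_attains_inf[OF compact_imp_closed[OF assms(1)] assms(2)] by blast
  ultimately show ?thesis by (metis dist_commute dist_norm)
qed

lemma H2:
  assumes "compact X" "x \<in> X" "S \<noteq> {}" "S \<subseteq> {z. c \<le> cmod z}"
  shows "c - cmod x \<le> hausdorff_dist X S"
proof -
  have "c - cmod x \<le> infdist x S" unfolding infdist_notempty[OF assms(3)]
  proof (rule cINF_greatest[OF assms(3)])
    fix y assume "y \<in> S"
    hence "c \<le> cmod y" using assms(4) by auto
    moreover have "cmod y - cmod x \<le> dist x y" by (metis dist_commute dist_norm norm_triangle_ineq2)
    ultimately show "c - cmod x \<le> dist x y" by linarith
  qed
  also have "\<dots> \<le> (SUP a\<in>X. infdist a S)"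
  proof (rule cSUP_upper[OF assms(2)])
    have "compact ((\<lambda>a. infdist a S) ` X)"
      by (intro compact_continuous_image continuous_intros assms(1))
    thus "bdd_above ((\<lambda>a. infdist a S) ` X)" by (intro bounded_imp_bdd_above compact_imp_bounded)
  qed
  also have "\<dots> \<le> hausdorff_dist X S" unfolding hausdorff_dist_def by simp
  finally show ?thesis .
qed

definition Ofun :: "nat \<Rightarrow> (nat \<Rightarrow> nat) \<Rightarrow> nat \<Rightarrow> nat" where
  "Ofun a G = (\<lambda>i. if i < a then G i else Suc i)"

definition Gnext :: "nat \<Rightarrow> (nat \<Rightarrow> nat) \<Rightarrow> nat \<Rightarrow> nat \<Rightarrow> nat" where
  "Gnext a G b = (\<lambda>i. if i < a then G i else if i < b then Suc i else if i = b then a else i)"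

definition good :: "nat \<Rightarrow> (nat \<Rightarrow> nat) \<Rightarrow> bool" where
  "good a G \<longleftrightarrow> inj G \<and> (\<forall>i<a. G i < a) \<and> (\<forall>y<a. \<exists>x<a. G x = y) \<and> (\<forall>i\<ge>a. G i = i)"

primrec st :: "(nat \<Rightarrow> nat \<Rightarrow> (nat \<Rightarrow> nat) \<Rightarrow> nat) \<Rightarrow> nat \<Rightarrow> nat \<times> (nat \<Rightarrow> nat)" where
  "st s 0 = (1, id)"
| "st s (Suc k) = (let a = fst (st s k); G = snd (st s k); b = Suc (max a (s k a G)) in (Suc b, Gnext a G b))"

definition AA where "AA s k = fst (st s k)"
definition GG where "GG s k = snd (st s k)"
definition BB where "BB s k = Suc (max (AA s k) (s k (AA s k) (GG s k)))"
definition Finf where "Finf s i = GG s (Suc i) i"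

lemma st_simps: "AA s 0 = 1" "GG s 0 = id" "AA s (Suc k) = Suc (BB s k)"
  "GG s (Suc k) = Gnext (AA s k) (GG s k) (BB s k)"
  by (simp_all add: AA_def GG_def BB_def Let_def)

lemma good_next:
  assumes "good a G" "a < b"
  shows "good (Suc b) (Gnext a G b)"
  unfolding good_def
proof (intro conjI allI impI)
  have inj: "inj G" and lt: "\<And>i. i < a \<Longrightarrow> G i < a" and su: "\<And>y. y < a \<Longrightarrow> \<exists>x<a. G x = y"
    and fx: "\<And>i. i \<ge> a \<Longrightarrow> G i = i"
    using assms(1) unfolding good_def by auto
  show "inj (Gnext a G b)"
  proof (rule injI)
    fix x y assume e: "Gnext a G b x = Gnext a G b y"
    show "x = y"
    proof (cases "x < a"; cases "y < a")
      assume "x < a" "y < a" thus ?thesis using e injD[OF inj] by (auto simp: Gnext_def)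
    next
      assume "x < a" "\<not> y < a" thus ?thesis using e lt[of x] assms(2) by (auto simp: Gnext_def split: if_splits)
    next
      assume "\<not> x < a" "y < a" thus ?thesis using e lt[of y] assms(2) by (auto simp: Gnext_def split: if_splits)
    next
      assume "\<not> x < a" "\<not> y < a" thus ?thesis using e assms(2) by (auto simp: Gnext_def split: if_splits)
    qed
  qed
  fix i show "i < Suc b \<Longrightarrow> Gnext a G b i < Suc b" using lt[of i] assms(2) by (auto simp: Gnext_def)
  show "i \<ge> Suc b \<Longrightarrow> Gnext a G b i = i" using assms(2) by (auto simp: Gnext_def)
next
  have lt: "\<And>i. i < a \<Longrightarrow> G i < a" and su: "\<And>y. y < a \<Longrightarrow> \<exists>x<a. G x = y"
    using assms(1) unfolding good_def by auto
  fix y assume y: "y < Suc b"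
  show "\<exists>x<Suc b. Gnext a G b x = y"
  proof (cases "y < a")
    case True then obtain x where "x < a" "G x = y" using su by blast
    thus ?thesis using assms(2) by (intro exI[of _ x]) (auto simp: Gnext_def)
  next
    case False
    show ?thesis
    proof (cases "y = a")
      case True thus ?thesis using assms(2) by (intro exI[of _ b]) (auto simp: Gnext_def)
    next
      case False2: False
      thus ?thesis using False y by (intro exI[of _ "y - 1"]) (auto simp: Gnext_def)
    qed
  qed
qed

lemma BB_gt: "AA s k < BB s k" "s k (AA s k) (GG s k) < BB s k"
  by (auto simp: BB_def)

lemma good_st: "good (AA s k) (GG s k)"
proof (induction k)
  case 0 thus ?case by (auto simp: st_simps good_def)
next
  case (Suc k) thus ?case using good_next BB_gt by (simp add: st_simps)
qed

lemma AA_gt: "k < AA s k"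
proof (induction k)
  case 0 thus ?case by (simp add: st_simps)
next
  case (Suc k) thus ?case using BB_gt(1)[of s k] by (simp add: st_simps)
qed

lemma AA_mono: "k \<le> m \<Longrightarrow> AA s k \<le> AA s m"
proof (induction m rule: dec_induct)
  case (step m) thus ?case using BB_gt(1)[of s m] by (simp add: st_simps)
qed simp

lemma GG_agree: "k \<le> m \<Longrightarrow> i < AA s k \<Longrightarrow> GG s m i = GG s k i"
proof (induction m rule: dec_induct)
  case (step m)
  have "i < AA s m" using step AA_mono[OF step(1), of s] by linarith
  thus ?case using step by (simp add: st_simps Gnext_def)
qed simp

lemma Finf_eq: "i < AA s k \<Longrightarrow> Finf s i = GG s k i"
proof -
  assume i: "i < AA s k"
  have i2: "i < AA s (Suc i)" using AA_gt[of "Suc i" s] by linarith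
  have "GG s (max k (Suc i)) i = GG s k i" using i by (intro GG_agree) auto
  moreover have "GG s (max k (Suc i)) i = GG s (Suc i) i" using i2 by (intro GG_agree) auto
  ultimately show ?thesis by (simp add: Finf_def)
qed

lemma Finf_O: "j < BB s k \<Longrightarrow> Finf s j = Ofun (AA s k) (GG s k) j"
proof (cases "j < AA s k")
  case True thus ?thesis by (simp add: Finf_eq Ofun_def)
next
  case False
  assume j: "j < BB s k"
  have "j < AA s (Suc k)" using j by (simp add: st_simps)
  hence "Finf s j = GG s (Suc k) j" by (rule Finf_eq)
  thus ?thesis using False j by (simp add: st_simps Gnext_def Ofun_def)
qed

lemma Finf_inj: "inj (Finf s)"
proof (rule injI)
  fix x y assume e: "Finf s x = Finf s y"
  define k where "k = Suc (max x y)"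
  have "x < AA s k" "y < AA s k" using AA_gt[of k s] by (auto simp: k_def)
  hence "GG s k x = GG s k y" using e by (simp add: Finf_eq)
  moreover have "inj (GG s k)" using good_st[of s k] by (simp add: good_def)
  ultimately show "x = y" by (metis injD)
qed

lemma Finf_surj: "surj (Finf s)"
proof -
  have "\<exists>x. y = Finf s x" for y
  proof -
    have y: "y < AA s y" using AA_gt by blast
    then obtain x where "x < AA s y" "GG s y x = y" using good_st[of s y] by (auto simp: good_def)
    hence "y = Finf s x" by (simp add: Finf_eq)
    thus ?thesis by blast
  qed
  thus ?thesis by blast
qed

lemma Finf_0: "Finf s 0 = 0"
  using Finf_eq[of 0 s 0] by (simp add: st_simps)

lemma Ofun_props:
  assumes "good a G"
  shows "inj (Ofun a G)" "\<And>i. Ofun a G i \<noteq> a"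
proof -
  have inj: "inj G" and lt: "\<And>i. i < a \<Longrightarrow> G i < a" using assms unfolding good_def by auto
  show "inj (Ofun a G)"
  proof (rule injI)
    fix x y assume "Ofun a G x = Ofun a G y"
    moreover have "G x = G y \<Longrightarrow> x = y" using inj by (rule injD)
    ultimately show "x = y" using lt[of x] lt[of y] by (auto simp: Ofun_def split: if_splits)
  qed
  fix i show "Ofun a G i \<noteq> a" using lt[of i] by (auto simp: Ofun_def)
qed

theorem mainTheorem9:
  fixes \<epsilon> :: real
  assumes "0 < \<epsilon>" and "\<epsilon> < 1"
  shows "\<not> (\<exists>(\<Gamma> :: nat \<Rightarrow> (nat \<Rightarrow> nat) \<Rightarrow> complex set) (L :: nat \<Rightarrow> (nat \<Rightarrow> nat) \<Rightarrow> nat set).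
            (\<forall>n. general_algorithm OmegaB (\<Gamma> n) (L n)) \<and>
            (\<forall>F\<in>OmegaB. (\<lambda>n. hausdorff_dist (\<Gamma> n F) (Sp_ap_eps \<epsilon> F)) \<longlonglongrightarrow> 0))"
proof
  assume "\<exists>(\<Gamma> :: nat \<Rightarrow> (nat \<Rightarrow> nat) \<Rightarrow> complex set) (L :: nat \<Rightarrow> (nat \<Rightarrow> nat) \<Rightarrow> nat set).
            (\<forall>n. general_algorithm OmegaB (\<Gamma> n) (L n)) \<and>
            (\<forall>F\<in>OmegaB. (\<lambda>n. hausdorff_dist (\<Gamma> n F) (Sp_ap_eps \<epsilon> F)) \<longlonglongrightarrow> 0)"
  then obtain \<Gamma> :: "nat \<Rightarrow> (nat \<Rightarrow> nat) \<Rightarrow> complex set" and L :: "nat \<Rightarrow> (nat \<Rightarrow> nat) \<Rightarrow> nat set"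
    where GA: "\<And>n. general_algorithm OmegaB (\<Gamma> n) (L n)"
      and CV: "\<And>F. F \<in> OmegaB \<Longrightarrow> (\<lambda>n. hausdorff_dist (\<Gamma> n F) (Sp_ap_eps \<epsilon> F)) \<longlonglongrightarrow> 0"
    by blast
  define \<delta> where "\<delta> = (1 - \<epsilon>) / 3"
  have \<delta>: "0 < \<delta>" using assms by (simp add: \<delta>_def)
  have ev_small: "\<exists>N. \<forall>n\<ge>N. hausdorff_dist (\<Gamma> n F) (Sp_ap_eps \<epsilon> F) < \<delta>" if "F \<in> OmegaB" for F
  proof -
    have "eventually (\<lambda>n. hausdorff_dist (\<Gamma> n F) (Sp_ap_eps \<epsilon> F) < \<delta>) sequentially"
      using order_tendstoD(2)[OF CV[OF that] \<delta>] .
    thus ?thesis by (simp add: eventually_sequentially)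
  qed
  have ex: "\<exists>n. n \<ge> k \<and> hausdorff_dist (\<Gamma> n F) (Sp_ap_eps \<epsilon> F) < \<delta>" if FOm: "F \<in> OmegaB" for F k
  proof -
    obtain N where "\<forall>n\<ge>N. hausdorff_dist (\<Gamma> n F) (Sp_ap_eps \<epsilon> F) < \<delta>" using ev_small[OF FOm] by blast
    thus ?thesis by (intro exI[of _ "max k N"]) auto
  qed
  define nsel where "nsel k a G = (SOME n. n \<ge> k \<and> hausdorff_dist (\<Gamma> n (Ofun a G)) (Sp_ap_eps \<epsilon> (Ofun a G)) < \<delta>)" for k a G
  define s where "s k a G = Max (L (nsel k a G) (Ofun a G))" for k a G
  define F where "F = Finf s"
  have Finj: "inj F" unfolding F_def by (rule Finf_inj)
  have Fsurj: "surj F" unfolding F_def by (rule Finf_surj)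
  have FO: "F \<in> OmegaB" using Finj by (rule inj_OmegaB)
  have SpF: "Sp_ap_eps \<epsilon> F \<subseteq> {z. 1 - \<epsilon> \<le> cmod z}" using Sp_away[OF Finj Fsurj assms(2,1)] .
  have F0: "F i = 0 \<longleftrightarrow> i = 0" for i
    using Finf_0[of s] injD[OF Finj, of i 0] by (auto simp: F_def)
  have "1 \<in> Sp_ap_eps \<epsilon> F"
  proof (rule eigen_in_Sp[OF Finj assms(1) ev_l2])
    fix i show "ev 0 (F i) = 1 * ev 0 i" using F0[of i] by (simp add: ev_def)
  qed
  hence SpFne: "Sp_ap_eps \<epsilon> F \<noteq> {}" by blast
  have key: "\<exists>n\<ge>k. 2 * \<delta> \<le> hausdorff_dist (\<Gamma> n F) (Sp_ap_eps \<epsilon> F)" for k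
  proof -
    define a where "a = AA s k"
    define G where "G = GG s k"
    define Oo where "Oo = Ofun a G"
    define n where "n = nsel k a G"
    have g: "good a G" unfolding a_def G_def by (rule good_st)
    have Oinj: "inj Oo" and Ona: "\<And>i. Oo i \<noteq> a" using Ofun_props[OF g] by (auto simp: Oo_def)
    have OO: "Oo \<in> OmegaB" using Oinj by (rule inj_OmegaB)
    have n: "n \<ge> k \<and> hausdorff_dist (\<Gamma> n Oo) (Sp_ap_eps \<epsilon> Oo) < \<delta>"
      unfolding n_def nsel_def Oo_def using someI_ex[OF ex[OF OO[unfolded Oo_def]]] .
    have ga: "\<Gamma> n Oo \<noteq> {}" "compact (\<Gamma> n Oo)" "finite (L n Oo)"
      "\<And>F'. F' \<in> OmegaB \<Longrightarrow> (\<forall>j\<in>L n Oo. F' j = Oo j) \<Longrightarrow> \<Gamma> n F' = \<Gamma> n Oo"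
      using GA[of n] OO unfolding general_algorithm_def by blast+
    have rd: "\<forall>j\<in>L n Oo. F j = Oo j"
    proof
      fix j assume j: "j \<in> L n Oo"
      have "j \<le> s k a G" unfolding s_def n_def[symmetric] Oo_def[symmetric] using ga(3) j by simp
      hence "j < BB s k" using BB_gt(2)[of s k] by (simp add: a_def G_def)
      thus "F j = Oo j" unfolding F_def Oo_def a_def G_def by (rule Finf_O)
    qed
    have eq: "\<Gamma> n F = \<Gamma> n Oo" using ga(4)[OF FO rd] .
    have "0 \<in> Sp_ap_eps \<epsilon> Oo"
    proof (rule eigen_in_Sp[OF Oinj assms(1) ev_l2])
      fix i show "ev a (Oo i) = 0 * ev a i" using Ona[of i] by (simp add: ev_def)
    qed
    then obtain x where x: "x \<in> \<Gamma> n Oo" "cmod (x - 0) < \<delta>"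
      using H1[OF ga(2,1) Sp_bounded[OF Oinj assms(2)]] n by blast
    have "1 - \<epsilon> - cmod x \<le> hausdorff_dist (\<Gamma> n F) (Sp_ap_eps \<epsilon> F)"
      using H2[OF _ _ SpFne SpF] x ga(2) eq by simp
    moreover have "2 * \<delta> \<le> 1 - \<epsilon> - cmod x" using x(2) by (simp add: \<delta>_def)
    ultimately show ?thesis using n by auto
  qed
  obtain N where N: "\<forall>n\<ge>N. hausdorff_dist (\<Gamma> n F) (Sp_ap_eps \<epsilon> F) < \<delta>" using ev_small[OF FO] by blast
  obtain n where nN: "n \<ge> N" and big: "2 * \<delta> \<le> hausdorff_dist (\<Gamma> n F) (Sp_ap_eps \<epsilon> F)" using key by blast
  have "hausdorff_dist (\<Gamma> n F) (Sp_ap_eps \<epsilon> F) < \<delta>" using N nN by blast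
  thus False using big \<delta> by linarith
qed

end
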